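(* Let $(V,\|\cdot\|)$ be a normed plane. For every $x\in S$, the inner bisector $\mathrm{bis_I}(-x,x)$ is a curve homeomorphic to a closed (compact) interval.
   Context: A normed (Minkowski) plane $(V,\|\cdot\|)$ is a two-dimensional real vector space with a norm; $B=\{v:\|v\|\le1\}$ is its unit ball and $S=\{v:\|v\|=1\}$ its unit circle. For distinct $x,y$, $\mathrm{bis}(x,y)=\{z\in V:\|z-x\|=\|z-y\|\}$. For $x\in S$, the inner bisector is $\mathrm{bis_I}(-x,x)=\mathrm{bis}(-x,x)\cap B$. *)

theory Defs
  imports "HOL-Analysis.Analysis"
begin

text \<open>A norm on the real plane, given as a function (Minkowski norm);
  the type real^2 carries its standard topology, which agrees with the
  topology of any norm on a finite-dimensional space.\<close>
definition is_norm :: "(real^2 \<Rightarrow> real) \<Rightarrow> bool" where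
  "is_norm N \<longleftrightarrow>
     (\<forall>x. N x = 0 \<longleftrightarrow> x = 0) \<and>
     (\<forall>x y. N (x + y) \<le> N x + N y) \<and>
     (\<forall>c x. N (c *\<^sub>R x) = \<bar>c\<bar> * N x)"

definition unit_ball :: "(real^2 \<Rightarrow> real) \<Rightarrow> (real^2) set" where
  "unit_ball N = {v. N v \<le> 1}"

definition unit_circle :: "(real^2 \<Rightarrow> real) \<Rightarrow> (real^2) set" where
  "unit_circle N = {v. N v = 1}"

definition bis :: "(real^2 \<Rightarrow> real) \<Rightarrow> real^2 \<Rightarrow> real^2 \<Rightarrow> (real^2) set" where
  "bis N x y = {z. N (z - x) = N (z - y)}"

definition inner_bis :: "(real^2 \<Rightarrow> real) \<Rightarrow> real^2 \<Rightarrow> (real^2) set" where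
  "inner_bis N x = bis N (-x) x \<inter> unit_ball N"

end

theory Submission imports Defs begin

lemma nN0: "is_norm N \<Longrightarrow> N 0 = 0" by (simp add: is_norm_def)
lemma nNtri: "is_norm N \<Longrightarrow> N (u + v) \<le> N u + N v" by (simp add: is_norm_def)
lemma nNsc: "is_norm N \<Longrightarrow> N (c *\<^sub>R v) = \<bar>c\<bar> * N v" by (simp add: is_norm_def)
lemma nNz: "is_norm N \<Longrightarrow> N v = 0 \<longleftrightarrow> v = 0" by (simp add: is_norm_def)
lemma nNminus: "is_norm N \<Longrightarrow> N (- v) = N v"
  using nNsc[of N "-1" v] by simp
lemma nNneg: "is_norm N \<Longrightarrow> N v \<ge> 0"
  using nNtri[of N v "-v"] nN0[of N] nNminus[of N v] by simp
lemma nNdiff: "is_norm N \<Longrightarrow> N u - N v \<le> N (u - v)"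
  using nNtri[of N "u - v" v] by simp
lemma nNsum: "is_norm N \<Longrightarrow> N (sum f A) \<le> (\<Sum>a\<in>A. N (f a))"
proof (induction A rule: infinite_finite_induct)
  case (infinite A) then show ?case by (simp add: nN0)
next
  case empty then show ?case by (simp add: nN0)
next
  case (insert a A)
  then show ?case using nNtri[of N "f a" "sum f A"] by simp
qed

lemma nNupper: assumes "is_norm N" shows "N v \<le> (\<Sum>b\<in>Basis. N b) * norm v"
proof -
  have "N v = N (\<Sum>b\<in>Basis. (v \<bullet> b) *\<^sub>R b)" by (simp add: euclidean_representation)
  also have "\<dots> \<le> (\<Sum>b\<in>Basis. N ((v \<bullet> b) *\<^sub>R b))" by (rule nNsum[OF assms])
  also have "\<dots> = (\<Sum>b\<in>Basis. \<bar>v \<bullet> b\<bar> * N b)" by (simp add: nNsc[OF assms])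
  also have "\<dots> \<le> (\<Sum>b\<in>Basis. norm v * N b)"
    by (rule sum_mono) (simp add: Basis_le_norm mult_right_mono nNneg[OF assms])
  also have "\<dots> = (\<Sum>b\<in>Basis. N b) * norm v" by (simp add: sum_distrib_left mult.commute)
  finally show ?thesis .
qed

lemma nNcont: assumes "is_norm N" shows "continuous_on S N"
proof -
  let ?C = "(\<Sum>b\<in>(Basis::(real^2) set). N b)"
  have "?C-lipschitz_on S N"
    unfolding lipschitz_on_def
  proof (intro conjI ballI)
    show "0 \<le> ?C" by (simp add: sum_nonneg nNneg[OF assms])
    fix u v assume "u \<in> S" "v \<in> S"
    have "N u - N v \<le> ?C * dist u v" using nNdiff[OF assms, of u v] nNupper[OF assms, of "u - v"]
      by (simp add: dist_norm)
    moreover have "N v - N u \<le> ?C * dist u v" using nNdiff[OF assms, of v u] nNupper[OF assms, of "v - u"]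
      by (simp add: dist_norm norm_minus_commute)
    ultimately show "dist (N u) (N v) \<le> ?C * dist u v" by (simp add: dist_real_def)
  qed
  then show ?thesis by (rule lipschitz_on_continuous_on)
qed

lemma nNlower: assumes "is_norm N" shows "\<exists>m>0. \<forall>v. m * norm v \<le> N v"
proof -
  have "compact (sphere (0::real^2) 1)" by simp
  moreover have "sphere (0::real^2) 1 \<noteq> {}" by simp
  ultimately obtain v0 where v0: "v0 \<in> sphere 0 1" "\<forall>y\<in>sphere 0 1. N v0 \<le> N y"
    using continuous_attains_inf[of "sphere 0 1" N] nNcont[OF assms] by blast
  have "v0 \<noteq> 0" using v0 by auto
  hence pos: "N v0 > 0" using nNz[OF assms, of v0] nNneg[OF assms, of v0] by linarith
  have "N v0 * norm v \<le> N v" for v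
  proof (cases "v = 0")
    case True then show ?thesis by (simp add: nN0[OF assms])
  next
    case False
    have "N v0 \<le> N ((1 / norm v) *\<^sub>R v)" using v0(2) False by (simp add: norm_divide)
    also have "\<dots> = N v / norm v" by (simp add: nNsc[OF assms])
    finally show ?thesis using False by (simp add: field_simps)
  qed
  with pos show ?thesis by blast
qed


locale bsetup =
  fixes N :: "real^2 \<Rightarrow> real" and x :: "real^2"
  assumes nrm: "is_norm N" and xS: "N x = 1"
begin

definition ell :: "real^2 \<Rightarrow> real" where "ell v = x$1 * v$2 - x$2 * v$1"

lemma Kmem: "z \<in> inner_bis N x \<longleftrightarrow> N (z + x) = N (z - x) \<and> N z \<le> 1"
  by (simp add: inner_bis_def bis_def unit_ball_def)

lemma Ncont: "continuous_on S N" by (rule nNcont[OF nrm])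

lemma K_compact: "compact (inner_bis N x)"
proof -
  have eq: "inner_bis N x = {z. N (z + x) = N (z - x)} \<inter> {z. N z \<le> 1}"
    by (auto simp: Kmem)
  have c1: "continuous_on UNIV (\<lambda>z. N (z + x))"
    by (rule continuous_on_compose2[OF Ncont]) (auto intro!: continuous_intros)
  have c2: "continuous_on UNIV (\<lambda>z. N (z - x))"
    by (rule continuous_on_compose2[OF Ncont]) (auto intro!: continuous_intros)
  have cl: "closed (inner_bis N x)" unfolding eq
    by (intro closed_Int closed_Collect_eq closed_Collect_le) (use c1 c2 Ncont in \<open>auto intro: continuous_intros\<close>)
  obtain m where m: "m > 0" "\<And>v. m * norm v \<le> N v" using nNlower[OF nrm] by blast
  have "bounded (inner_bis N x)" unfolding bounded_iff
  proof (intro exI ballI)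
    fix z assume "z \<in> inner_bis N x"
    hence "m * norm z \<le> 1" using m(2)[of z] by (auto simp: Kmem)
    thus "norm z \<le> 1 / m" using m(1) by (simp add: field_simps)
  qed
  with cl show ?thesis by (simp add: compact_eq_bounded_closed)
qed

lemma K_symm: "z \<in> inner_bis N x \<Longrightarrow> - z \<in> inner_bis N x"
proof -
  assume "z \<in> inner_bis N x"
  moreover have "N (- z + x) = N (z - x)" using nNminus[OF nrm, of "z - x"] by (simp add: algebra_simps)
  moreover have "N (- z - x) = N (z + x)" proof -
    have "- z - x = - (z + x)" by simp
    thus ?thesis using nNminus[OF nrm, of "z + x"] by metis
  qed
  ultimately show ?thesis using nNminus[OF nrm, of z] by (simp add: Kmem)
qed

lemma ball_convex: assumes "N u \<le> 1" "N v \<le> 1" "0 \<le> a" "a \<le> 1"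
  shows "N (a *\<^sub>R u + (1 - a) *\<^sub>R v) \<le> 1"
proof -
  have "N (a *\<^sub>R u + (1 - a) *\<^sub>R v) \<le> a * N u + (1 - a) * N v"
    using nNtri[OF nrm, of "a *\<^sub>R u" "(1 - a) *\<^sub>R v"] assms by (simp add: nNsc[OF nrm])
  also have "\<dots> \<le> a * 1 + (1 - a) * 1"
    using assms by (intro add_mono mult_left_mono) auto
  finally show ?thesis by simp
qed

lemma ivt: assumes "N (c + d) \<le> 1" "N (c - d) \<le> 1"
  "N (c + d - x) \<le> N (c + d + x)" "N (c - d + x) \<le> N (c - d - x)"
  shows "\<exists>\<theta>\<in>{-1..1}. c + \<theta> *\<^sub>R d \<in> inner_bis N x"
proof -
  define h where "h \<theta> = N (c + \<theta> *\<^sub>R d + x) - N (c + \<theta> *\<^sub>R d - x)" for \<theta>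
  have hc: "continuous_on {-1..1} h" unfolding h_def
    by (intro continuous_on_diff; rule continuous_on_compose2[OF Ncont]) (auto intro!: continuous_intros)
  have "h (-1) \<le> 0" "0 \<le> h 1" using assms(3,4) by (auto simp: h_def)
  then obtain \<theta> where th: "-1 \<le> \<theta>" "\<theta> \<le> 1" "h \<theta> = 0"
    using IVT'[of h "-1" 0 1] hc by auto
  have "c + \<theta> *\<^sub>R d = ((1 + \<theta>) / 2) *\<^sub>R (c + d) + (1 - (1 + \<theta>) / 2) *\<^sub>R (c - d)"
    by (simp add: algebra_simps scaleR_diff_right flip: scaleR_add_left) (simp add: field_simps scaleR_add_right flip: scaleR_add_left)
  hence "N (c + \<theta> *\<^sub>R d) \<le> 1" using ball_convex[OF assms(1,2), of "(1 + \<theta>) / 2"] th by simp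
  with th show ?thesis by (auto simp: Kmem h_def)
qed


lemma conv_le: assumes "0 \<le> a" "a \<le> 1"
  shows "N (a *\<^sub>R u + (1 - a) *\<^sub>R v) \<le> a * N u + (1 - a) * N v"
  using nNtri[OF nrm, of "a *\<^sub>R u" "(1 - a) *\<^sub>R v"] assms by (simp add: nNsc[OF nrm])

lemma ell_add: "ell (u + v) = ell u + ell v" by (simp add: ell_def algebra_simps)
lemma ell_diff: "ell (u - v) = ell u - ell v" by (simp add: ell_def algebra_simps)
lemma ell_scale: "ell (c *\<^sub>R v) = c * ell v" by (simp add: ell_def algebra_simps)
lemma ell_x: "ell x = 0" by (simp add: ell_def)

lemma x_nz: "x \<noteq> 0" using xS nN0[OF nrm] by auto

lemma par: assumes "ell w = 0" shows "\<exists>\<mu>. w = \<mu> *\<^sub>R x"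
proof (cases "x$1 = 0")
  case False
  have "w = (w$1 / x$1) *\<^sub>R x"
    using assms False unfolding vec_eq_iff forall_2 ell_def by (auto simp: field_simps)
  then show ?thesis by blast
next
  case True
  hence x2: "x$2 \<noteq> 0" using x_nz unfolding vec_eq_iff forall_2 by auto
  have "w = (w$2 / x$2) *\<^sub>R x"
    using assms True x2 unfolding vec_eq_iff forall_2 ell_def by (auto simp: field_simps)
  then show ?thesis by blast
qed

lemma noshift: assumes z: "z \<in> inner_bis N x" and ze: "z + e *\<^sub>R x \<in> inner_bis N x" and e: "e > 0"
  shows False
proof -
  define P where "P = N (z + x)"
  define Q where "Q = N (z + (1 + e) *\<^sub>R x)"
  have Pm: "N (z - x) = P" using z by (simp add: Kmem P_def)
  have Qm: "N (z + (e - 1) *\<^sub>R x) = Q"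
  proof -
    have "N (z + e *\<^sub>R x + x) = N (z + e *\<^sub>R x - x)" using ze by (simp add: Kmem)
    moreover have "z + e *\<^sub>R x + x = z + (1 + e) *\<^sub>R x" by (simp add: algebra_simps)
    moreover have "z + e *\<^sub>R x - x = z + (e - 1) *\<^sub>R x" by (simp add: algebra_simps)
    ultimately show ?thesis by (simp add: Q_def)
  qed
  have Nz: "N z \<le> 1" using z by (simp add: Kmem)
  have Nze: "N (z + e *\<^sub>R x) \<le> 1" using ze by (simp add: Kmem)
  have big: "2 + e \<le> P + Q"
  proof -
    have "(z + (1 + e) *\<^sub>R x) - (z - x) = (2 + e) *\<^sub>R x" by (simp add: scaleR_add_left scaleR_2)
    hence "N ((z + (1 + e) *\<^sub>R x) - (z - x)) = 2 + e" using e by (simp add: nNsc[OF nrm] xS)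
    moreover have "N ((z + (1 + e) *\<^sub>R x) - (z - x)) \<le> N (z + (1 + e) *\<^sub>R x) + N (- (z - x))"
      using nNtri[OF nrm] by (metis diff_conv_add_uminus)
    ultimately show ?thesis using nNminus[OF nrm, of "z - x"] Pm by (simp add: Q_def)
  qed
  have "P \<le> 1 \<and> Q \<le> 1"
  proof (cases "e \<le> 1")
    case True
    have P1: "1 \<le> P"
    proof -
      have "(z + x) - (z - x) = 2 *\<^sub>R x" by (simp add: scaleR_2)
      hence "N ((z + x) - (z - x)) = 2" by (simp add: nNsc[OF nrm] xS)
      moreover have "N ((z + x) - (z - x)) \<le> N (z + x) + N (- (z - x))"
        using nNtri[OF nrm] by (metis diff_conv_add_uminus)
      ultimately show ?thesis using nNminus[OF nrm, of "z - x"] Pm by (simp add: P_def)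
    qed
    have hP: "P \<le> e + (1 - e) * Q"
    proof -
      have "z + x = e *\<^sub>R (z + e *\<^sub>R x) + (1 - e) *\<^sub>R (z + (1 + e) *\<^sub>R x)"
        by (simp add: algebra_simps)
      hence "P \<le> e * N (z + e *\<^sub>R x) + (1 - e) * Q"
        using conv_le[of e] e True by (simp add: P_def Q_def)
      also have "\<dots> \<le> e * 1 + (1 - e) * Q" using Nze e True by (intro add_mono mult_left_mono) auto
      finally show ?thesis by simp
    qed
    have hQ: "Q \<le> (1 - e) * P + e"
    proof -
      have "z + (e - 1) *\<^sub>R x = (1 - e) *\<^sub>R (z - x) + (1 - (1 - e)) *\<^sub>R z"
        by (simp add: algebra_simps)
      hence "Q \<le> (1 - e) * P + (1 - (1 - e)) * N z"
        using conv_le[of "1 - e" "z - x" z] e True Qm Pm by simp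
      also have "\<dots> \<le> (1 - e) * P + e * 1" using Nz e True by (intro add_mono mult_left_mono) auto
      finally show ?thesis by simp
    qed
    have "(1 - e) * (Q - 1) \<le> (1 - e) * ((1 - e) * (P - 1))"
      using hQ True by (intro mult_left_mono) (auto simp: algebra_simps)
    hence "P - 1 \<le> (1 - e) * (1 - e) * (P - 1)" using hP by (simp add: algebra_simps)
    hence "(P - 1) * (e * (2 - e)) \<le> 0" by (simp add: algebra_simps)
    moreover have "e * (2 - e) > 0" using e True by simp
    ultimately have "P - 1 \<le> 0" using mult_pos_pos[of "P - 1" "e * (2 - e)"] by linarith
    hence "(1 - e) * P \<le> (1 - e) * 1" using True by (intro mult_left_mono) auto
    with hQ \<open>P - 1 \<le> 0\<close> show ?thesis by (smt (verit))
  next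
    case False
    have le2: "e \<le> 2"
    proof -
      have "N (e *\<^sub>R x) \<le> N (z + e *\<^sub>R x) + N (- z)"
        using nNtri[OF nrm, of "z + e *\<^sub>R x" "- z"] by simp
      thus ?thesis using Nze Nz nNminus[OF nrm, of z] e by (simp add: nNsc[OF nrm] xS)
    qed
    have "z + x = (1 / e) *\<^sub>R (z + e *\<^sub>R x) + (1 - 1 / e) *\<^sub>R z"
      using e by (simp add: algebra_simps)
    hence "P \<le> (1 / e) * N (z + e *\<^sub>R x) + (1 - 1 / e) * N z"
      using conv_le[of "1 / e" "z + e *\<^sub>R x" z] e False by (simp add: P_def)
    also have "\<dots> \<le> (1 / e) * 1 + (1 - 1 / e) * 1"
      using Nz Nze e False by (intro add_mono mult_left_mono) auto
    finally have "P \<le> 1" by simp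
    have "z + (e - 1) *\<^sub>R x = ((e - 1) / e) *\<^sub>R (z + e *\<^sub>R x) + (1 - (e - 1) / e) *\<^sub>R z"
      using e by (simp add: algebra_simps diff_divide_distrib)
    hence "Q \<le> ((e - 1) / e) * N (z + e *\<^sub>R x) + (1 - (e - 1) / e) * N z"
      using conv_le[of "(e - 1) / e" "z + e *\<^sub>R x" z] e False Qm by simp
    also have "\<dots> \<le> ((e - 1) / e) * 1 + (1 - (e - 1) / e) * 1"
      using Nz Nze e False by (intro add_mono mult_left_mono) auto
    finally have "Q \<le> 1" by simp
    with \<open>P \<le> 1\<close> show ?thesis by simp
  qed
  with big e show False by simp
qed


lemma K_inj: "inj_on ell (inner_bis N x)"
proof (rule inj_onI)
  fix u v assume u: "u \<in> inner_bis N x" and v: "v \<in> inner_bis N x" and eq: "ell u = ell v"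
  then obtain \<mu> where mu: "u - v = \<mu> *\<^sub>R x" using par[of "u - v"] by (auto simp: ell_diff)
  show "u = v"
  proof (cases "\<mu> = 0")
    case True then show ?thesis using mu by simp
  next
    case False
    show ?thesis
    proof (cases "\<mu> > 0")
      case True
      have "u = v + \<mu> *\<^sub>R x" using mu by (simp add: algebra_simps)
      then show ?thesis using noshift[OF v _ True] u by simp
    next
      case f2: False
      hence "- \<mu> > 0" using False by simp
      have "v = u + (- \<mu>) *\<^sub>R x" using mu by (simp add: algebra_simps)
      then show ?thesis using noshift[OF u _ \<open>- \<mu> > 0\<close>] v by simp
    qed
  qed
qed

lemma tri_low: "N u - N v \<le> N (u - v)" by (rule nNdiff[OF nrm])

lemma star: assumes z: "z \<in> inner_bis N x" and l: "0 \<le> l" "l \<le> 1"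
  shows "\<exists>w\<in>inner_bis N x. ell w = l * ell z"
proof -
  have Nz: "N z \<le> 1" and zb: "N (z + x) = N (z - x)" using z by (auto simp: Kmem)
  define c where "c = l *\<^sub>R z"
  define d where "d = (1 - l) *\<^sub>R x"
  have Nmx: "N (- x) = 1" using nNminus[OF nrm, of x] xS by simp
  have h1: "N (c + d) \<le> 1" unfolding c_def d_def using ball_convex[OF Nz, of x l] xS l by simp
  have h2: "N (c - d) \<le> 1" unfolding c_def d_def using ball_convex[OF Nz Nmx[THEN eq_refl], of l] l
    by (simp add: algebra_simps)
  have h3: "N (c + d - x) \<le> N (c + d + x)"
  proof -
    have e1: "c + d - x = l *\<^sub>R (z - x)" unfolding c_def d_def by (simp add: algebra_simps)
    have e2: "c + d + x = (z + x) - (1 - l) *\<^sub>R (z - x)" unfolding c_def d_def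
      by (simp add: algebra_simps scaleR_2)
    have "N (c + d + x) \<ge> N (z + x) - N ((1 - l) *\<^sub>R (z - x))" unfolding e2 by (rule tri_low)
    moreover have "N ((1 - l) *\<^sub>R (z - x)) = N (z - x) - l * N (z - x)" using l by (simp add: nNsc[OF nrm] left_diff_distrib)
    moreover have "N (l *\<^sub>R (z - x)) = l * N (z - x)" using l by (simp add: nNsc[OF nrm])
    ultimately show ?thesis unfolding e1 using zb by linarith
  qed
  have h4: "N (c - d + x) \<le> N (c - d - x)"
  proof -
    have e1: "c - d + x = l *\<^sub>R (z + x)" unfolding c_def d_def by (simp add: algebra_simps)
    have e2: "c - d - x = (z - x) - (1 - l) *\<^sub>R (z + x)" unfolding c_def d_def
      by (simp add: algebra_simps scaleR_2)
    have "N (c - d - x) \<ge> N (z - x) - N ((1 - l) *\<^sub>R (z + x))" unfolding e2 by (rule tri_low)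
    moreover have "N ((1 - l) *\<^sub>R (z + x)) = N (z + x) - l * N (z + x)" using l by (simp add: nNsc[OF nrm] left_diff_distrib)
    moreover have "N (l *\<^sub>R (z + x)) = l * N (z + x)" using l by (simp add: nNsc[OF nrm])
    ultimately show ?thesis unfolding e1 using zb by linarith
  qed
  obtain th where "c + th *\<^sub>R d \<in> inner_bis N x" using ivt[OF h1 h2 h3 h4] by blast
  moreover have "ell (c + th *\<^sub>R d) = l * ell z" unfolding c_def d_def
    by (simp add: ell_add ell_scale ell_x)
  ultimately show ?thesis by blast
qed

lemma nontriv: "\<exists>w\<in>inner_bis N x. ell w \<noteq> 0"
proof -
  obtain e where e: "ell e \<noteq> 0"
  proof (cases "x$1 = 0")
    case True
    hence "x$2 \<noteq> 0" using x_nz unfolding vec_eq_iff forall_2 by auto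
    hence "ell (axis 1 1) \<noteq> 0" by (simp add: ell_def axis_def)
    then show ?thesis using that by blast
  next
    case False
    hence "ell (axis 2 1) \<noteq> 0" by (simp add: ell_def axis_def)
    then show ?thesis using that by blast
  qed
  hence enz: "e \<noteq> 0" by (auto simp: ell_def)
  hence Npos: "N e > 0" using nNz[OF nrm, of e] nNneg[OF nrm, of e] by linarith
  define w where "w = (1 / N e) *\<^sub>R e"
  have Nw: "N w = 1" using Npos by (simp add: w_def nNsc[OF nrm])
  have ew: "ell w \<noteq> 0" using e Npos by (simp add: w_def ell_scale)
  have Nmx: "N (- x) = 1" using nNminus[OF nrm, of x] xS by simp
  define c where "c = (1/2::real) *\<^sub>R w"
  define d where "d = (1/2::real) *\<^sub>R x"
  have h1: "N (c + d) \<le> 1" unfolding c_def d_def using ball_convex[of w x "1/2"] Nw xS by simp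
  have h2: "N (c - d) \<le> 1" unfolding c_def d_def using ball_convex[of w "-x" "1/2"] Nw Nmx
    by (simp add: algebra_simps)
  have h3: "N (c + d - x) \<le> N (c + d + x)"
  proof -
    have "c + d - x = (1/2) *\<^sub>R w + (1 - 1/2) *\<^sub>R (-x)" unfolding c_def d_def
      by (auto simp: vec_eq_iff algebra_simps)
    hence "N (c + d - x) \<le> 1" using ball_convex[of w "-x" "1/2"] Nw Nmx by simp
    moreover have E: "c + d + x = (3/2::real) *\<^sub>R x - (- c)" unfolding c_def d_def
      by (auto simp: vec_eq_iff algebra_simps)
    moreover have "N ((3/2::real) *\<^sub>R x) - N (- c) \<le> N ((3/2::real) *\<^sub>R x - (- c))" by (rule tri_low)
    moreover have "N (- c) = 1/2" unfolding c_def using Nw by (simp add: nNminus[OF nrm] nNsc[OF nrm])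
    moreover have "N ((3/2::real) *\<^sub>R x) = 3/2" using xS by (simp add: nNsc[OF nrm])
    moreover have "N (c + d + x) = N ((3/2::real) *\<^sub>R x - (- c))" using E by (rule arg_cong)
    ultimately show ?thesis by linarith
  qed
  have h4: "N (c - d + x) \<le> N (c - d - x)"
  proof -
    have "c - d + x = (1/2) *\<^sub>R w + (1 - 1/2) *\<^sub>R x" unfolding c_def d_def
      by (auto simp: vec_eq_iff algebra_simps)
    hence "N (c - d + x) \<le> 1" using ball_convex[of w x "1/2"] Nw xS by simp
    moreover have E: "c - d - x = (- (3/2::real)) *\<^sub>R x - (- c)" unfolding c_def d_def
      by (auto simp: vec_eq_iff algebra_simps)
    moreover have "N ((- (3/2::real)) *\<^sub>R x) - N (- c) \<le> N ((- (3/2::real)) *\<^sub>R x - (- c))" by (rule tri_low)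
    moreover have "N (- c) = 1/2" unfolding c_def using Nw by (simp add: nNminus[OF nrm] nNsc[OF nrm])
    moreover have "N ((- (3/2::real)) *\<^sub>R x) = 3/2" by (simp only: nNsc[OF nrm] xS)
    moreover have "N (c - d - x) = N ((- (3/2::real)) *\<^sub>R x - (- c))" using E by (rule arg_cong)
    ultimately show ?thesis by linarith
  qed
  obtain th where "c + th *\<^sub>R d \<in> inner_bis N x" using ivt[OF h1 h2 h3 h4] by blast
  moreover have "ell (c + th *\<^sub>R d) \<noteq> 0" using ew unfolding c_def d_def
    by (simp add: ell_add ell_scale ell_x)
  ultimately show ?thesis by blast
qed

lemma main: "inner_bis N x homeomorphic {0..(1::real)}"
proof -
  let ?K = "inner_bis N x"
  have ellc: "continuous_on S ell" for S unfolding ell_def by (intro continuous_intros)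
  have h1: "?K homeomorphic ell ` ?K"
    by (rule homeomorphic_compact[OF K_compact ellc refl K_inj])
  have zK: "0 \<in> ?K" using nNminus[OF nrm, of x] by (simp add: Kmem nN0[OF nrm])
  have ell0: "ell 0 = 0" by (simp add: ell_def)
  have iv: "is_interval (ell ` ?K)" unfolding is_interval_1
  proof (intro ballI allI impI)
    fix a b t assume a: "a \<in> ell ` ?K" and b: "b \<in> ell ` ?K" and abt: "a \<le> t \<and> t \<le> b"
    hence ab: "a \<le> t" "t \<le> b" by auto
    show "t \<in> ell ` ?K"
    proof (cases "t \<ge> 0")
      case True
      obtain z where z: "z \<in> ?K" "b = ell z" using b by blast
      show ?thesis
      proof (cases "b = 0")
        case True then show ?thesis using ab \<open>t \<ge> 0\<close> zK ell0 by (metis antisym image_eqI)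
      next
        case False
        hence bp: "b > 0" using ab True by simp
        obtain w where "w \<in> ?K" "ell w = (t / b) * ell z" using star[OF z(1), of "t / b"] bp True ab by auto
        thus ?thesis using z bp by (auto intro!: image_eqI)
      qed
    next
      case False
      obtain z where z: "z \<in> ?K" "a = ell z" using a by blast
      have ap: "a < 0" using ab False by simp
      have l1: "0 \<le> t / a" using ap False by (simp add: divide_nonpos_neg)
      have l2: "t / a \<le> 1" using ap ab by (simp add: divide_le_eq)
      obtain w where "w \<in> ?K" "ell w = (t / a) * ell z" using star[OF z(1) l1 l2] by blast
      thus ?thesis using z ap by (auto intro!: image_eqI)
    qed
  qed
  have "compact (ell ` ?K)" by (rule compact_continuous_image[OF ellc K_compact])
  moreover have "connected (ell ` ?K)" using iv by (rule is_interval_connected)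
  ultimately have "\<exists>a b. ell ` ?K = {a..b}" using connected_compact_interval_1[of "ell ` ?K"] by simp
  then obtain a b where ab: "ell ` ?K = {a..b}" by blast
  obtain w where w: "w \<in> ?K" "ell w \<noteq> 0" using nontriv by blast
  have "0 \<in> ell ` ?K" using zK ell0 by (metis image_eqI)
  moreover have "ell w \<in> ell ` ?K" using w(1) by (rule imageI)
  ultimately have "0 \<in> {a..b}" "ell w \<in> {a..b}" unfolding ab by auto
  hence "a < b" using w(2) by auto
  hence "{a..b} homeomorphic {0..(1::real)}" by (intro homeomorphic_closed_intervals_real) auto
  with h1 show ?thesis unfolding ab by (rule homeomorphic_trans)
qed

end

theorem proposition4p1:
  fixes N :: "real^2 \<Rightarrow> real" and x :: "real^2"
  assumes "is_norm N" and "x \<in> unit_circle N"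
  shows "inner_bis N x homeomorphic {0..(1::real)}"
proof -
  interpret bsetup N x using assms by unfold_locales (auto simp: unit_circle_def)
  show ?thesis by (rule main)
qed

end
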